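(* Let $\alpha,\beta>0$ and let $\lambda\in\mathbb{R}$, $a,b>0$ with $-\min\{a,b\}<\frac{\lambda}{2}<\min\{a,b\}$. Let $X,Y$ be independent random variables with $X\sim \mathrm{Be}'(\lambda,a,b;\alpha,1)$ and $Y\sim\mathrm{Be}'(-\lambda,a,b;\beta,1)$, and set $(U,V)=H_I^{+,\alpha,\beta}(X,Y)$. Then $U$ and $V$ are independent, with $U\sim\mathrm{Be}'(-\lambda,a,b;\alpha,1)$ and $V\sim \mathrm{Be}'(\lambda,a,b;\beta,1)$.
   Context: $\mathbb{R}_+=(0,\infty)$. For $\alpha,\beta>0$ the map $H_I^{+,\alpha,\beta}:\mathbb{R}_+^2\to\mathbb{R}_+^2$ is $$H_I^{+,\alpha,\beta}(x,y)=\left(\frac{y}{\alpha}\,\frac{\beta+\alpha x+\beta y+\alpha\beta xy}{1+x+y+\beta xy},\ \frac{x}{\beta}\,\frac{\alpha+\alpha x+\beta y+\alpha\beta xy}{1+x+y+\alpha xy}\right).$$ For $p,q>0$ and $\lambda,a,b\in\mathbb{R}$ with $-b<\frac{\lambda}{2}<a$, the generalized Beta prime distribution $\mathrm{Be}'(\lambda,a,b;p,q)$ is the probability distribution on $\mathbb{R}_+$ with density proportional to $x^{\lambda-1}(1+px)^{-a-\frac{\lambda}{2}}(1+qx^{-1})^{-b+\frac{\lambda}{2}}$, $x\in\mathbb{R}_+$. *)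

theory Defs
  imports "HOL-Probability.Probability"
begin

text \<open>The map H_I^{+,alpha,beta} on pairs of reals (intended domain: the open positive quadrant).\<close>
definition H_I_plus :: "real \<Rightarrow> real \<Rightarrow> real \<times> real \<Rightarrow> real \<times> real" where
  "H_I_plus \<alpha> \<beta> = (\<lambda>(x, y).
     ( (y / \<alpha>) * ((\<beta> + \<alpha> * x + \<beta> * y + \<alpha> * \<beta> * x * y) / (1 + x + y + \<beta> * x * y)),
       (x / \<beta>) * ((\<alpha> + \<alpha> * x + \<beta> * y + \<alpha> * \<beta> * x * y) / (1 + x + y + \<alpha> * x * y)) ))"

text \<open>Unnormalised density of the generalized Beta prime distribution Be'(lambda,a,b;p,q), zero off (0,infinity).\<close>
definition beta_prime_kernel :: "real \<Rightarrow> real \<Rightarrow> real \<Rightarrow> real \<Rightarrow> real \<Rightarrow> real \<Rightarrow> real" where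
  "beta_prime_kernel lam a b p q x =
     (if 0 < x then x powr (lam - 1) * (1 + p * x) powr (- a - lam / 2) * (1 + q / x) powr (- b + lam / 2)
      else 0)"

definition beta_prime_density :: "real \<Rightarrow> real \<Rightarrow> real \<Rightarrow> real \<Rightarrow> real \<Rightarrow> real \<Rightarrow> real" where
  "beta_prime_density lam a b p q x =
     beta_prime_kernel lam a b p q x / integral\<^sup>L lborel (beta_prime_kernel lam a b p q)"

end

theory Submission
  imports Defs
begin



definition Hu :: "real \<Rightarrow> real \<Rightarrow> real \<Rightarrow> real \<Rightarrow> real" where
  "Hu \<alpha> \<beta> x y = (y / \<alpha>) * ((\<beta> + \<alpha> * x + \<beta> * y + \<alpha> * \<beta> * x * y) / (1 + x + y + \<beta> * x * y))"
definition Hv :: "real \<Rightarrow> real \<Rightarrow> real \<Rightarrow> real \<Rightarrow> real" where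
  "Hv \<alpha> \<beta> x y = (x / \<beta>) * ((\<alpha> + \<alpha> * x + \<beta> * y + \<alpha> * \<beta> * x * y) / (1 + x + y + \<alpha> * x * y))"

lemma Hu_Hv_swap: "Hv \<alpha> \<beta> x y = Hu \<beta> \<alpha> y x"
  unfolding Hu_def Hv_def by (simp add: algebra_simps)

lemma H_facts:
  fixes \<alpha> \<beta> x y :: real
  assumes "\<alpha> > 0" "\<beta> > 0" "x > 0" "y > 0"
  defines "D1 \<equiv> 1 + x + y + \<beta> * x * y" and "D2 \<equiv> 1 + x + y + \<alpha> * x * y"
  and "N1 \<equiv> \<beta> + \<alpha> * x + \<beta> * y + \<alpha> * \<beta> * x * y" and "N2 \<equiv> \<alpha> + \<alpha> * x + \<beta> * y + \<alpha> * \<beta> * x * y"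
  shows "D1 > 0" "D2 > 0" "N1 > 0" "N2 > 0"
    "Hu \<alpha> \<beta> x y = y * N1 / (\<alpha> * D1)" "Hv \<alpha> \<beta> x y = x * N2 / (\<beta> * D2)"
    "1 + \<alpha> * Hu \<alpha> \<beta> x y = (1 + \<beta> * y) * D2 / D1"
    "1 + \<beta> * Hv \<alpha> \<beta> x y = (1 + \<alpha> * x) * D1 / D2"
    "1 + Hu \<alpha> \<beta> x y = (1 + y) * N2 / (\<alpha> * D1)"
    "1 + Hv \<alpha> \<beta> x y = (1 + x) * N1 / (\<beta> * D2)"
proof -
  show p: "D1 > 0" "D2 > 0" "N1 > 0" "N2 > 0" using assms unfolding D1_def D2_def N1_def N2_def
    by (auto intro!: add_pos_pos mult_pos_pos)
  show u: "Hu \<alpha> \<beta> x y = y * N1 / (\<alpha> * D1)" and v: "Hv \<alpha> \<beta> x y = x * N2 / (\<beta> * D2)"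
    unfolding Hu_def Hv_def D1_def D2_def N1_def N2_def by simp_all
  have "D1 + y * N1 = (1 + \<beta> * y) * D2" unfolding D1_def D2_def N1_def by (simp add: algebra_simps)
  then show "1 + \<alpha> * Hu \<alpha> \<beta> x y = (1 + \<beta> * y) * D2 / D1"
    unfolding u using p assms(1-4) by (simp add: field_simps)
  have "D2 + x * N2 = (1 + \<alpha> * x) * D1" unfolding D1_def D2_def N2_def by (simp add: algebra_simps)
  then show "1 + \<beta> * Hv \<alpha> \<beta> x y = (1 + \<alpha> * x) * D1 / D2"
    unfolding v using p assms(1-4) by (simp add: field_simps)
  have "\<alpha> * D1 + y * N1 = (1 + y) * N2" unfolding D1_def N2_def N1_def by (simp add: algebra_simps)
  then show "1 + Hu \<alpha> \<beta> x y = (1 + y) * N2 / (\<alpha> * D1)"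
    unfolding u using p assms(1-4) by (simp add: field_simps)
  have "\<beta> * D2 + x * N2 = (1 + x) * N1" unfolding D2_def N2_def N1_def by (simp add: algebra_simps)
  then show "1 + Hv \<alpha> \<beta> x y = (1 + x) * N1 / (\<beta> * D2)"
    unfolding v using p assms(1-4) by (simp add: field_simps)
qed

lemma Hu_invol: assumes "\<alpha> > 0" "\<beta> > 0" "x > 0" "y > 0"
  shows "Hu \<alpha> \<beta> (Hu \<alpha> \<beta> x y) (Hv \<alpha> \<beta> x y) = x"
proof -
  define u where "u = Hu \<alpha> \<beta> x y"
  define v where "v = Hv \<alpha> \<beta> x y"
  define D1 where "D1 = 1 + x + y + \<beta> * x * y"
  define D2 where "D2 = 1 + x + y + \<alpha> * x * y"
  define N1 where "N1 = \<beta> + \<alpha> * x + \<beta> * y + \<alpha> * \<beta> * x * y"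
  define N2 where "N2 = \<alpha> + \<alpha> * x + \<beta> * y + \<alpha> * \<beta> * x * y"
  note F = H_facts[OF assms, folded D1_def D2_def N1_def N2_def u_def v_def]
  have e1: "1 + u + v + \<beta> * u * v = (1 + v) + u * (1 + \<beta> * v)" by (simp add: algebra_simps)
  have e2: "\<beta> + \<alpha> * u + \<beta> * v + \<alpha> * \<beta> * u * v = \<beta> * (1 + v) + \<alpha> * u * (1 + \<beta> * v)" by (simp add: algebra_simps)
  have den: "(1 + v) + u * (1 + \<beta> * v) = N1 * N2 / (\<alpha> * \<beta> * D2)"
  proof -
    have "(1 + v) + u * (1 + \<beta> * v) = (1+x)*N1/(\<beta>*D2) + y*N1/(\<alpha>*D1)*((1+\<alpha>*x)*D1/D2)"
      using F(5,8,10) by simp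
    also have "\<dots> = N1 * N2 / (\<alpha> * \<beta> * D2)"
      using F(1-4) assms by (simp add: field_simps, (simp add: N2_def algebra_simps)?)
    finally show ?thesis .
  qed
  have num: "\<beta> * (1 + v) + \<alpha> * u * (1 + \<beta> * v) = N1"
  proof -
    have "\<beta> * (1 + v) + \<alpha> * u * (1 + \<beta> * v) = \<beta>*((1+x)*N1/(\<beta>*D2)) + \<alpha>*(y*N1/(\<alpha>*D1))*((1+\<alpha>*x)*D1/D2)"
      using F(5,8,10) by simp
    also have "\<dots> = N1"
      using F(1-4) assms by (simp add: field_simps, (simp add: D2_def algebra_simps)?)
    finally show ?thesis .
  qed
  have "Hu \<alpha> \<beta> u v = (v / \<alpha>) * (N1 / (N1 * N2 / (\<alpha> * \<beta> * D2)))"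
    unfolding Hu_def e1 e2 den num ..
  also have "\<dots> = x" unfolding F(6) using F(1-4) assms by (simp add: field_simps)
  finally show ?thesis unfolding u_def v_def .
qed

lemma Hv_invol: assumes "\<alpha> > 0" "\<beta> > 0" "x > 0" "y > 0"
  shows "Hv \<alpha> \<beta> (Hu \<alpha> \<beta> x y) (Hv \<alpha> \<beta> x y) = y"
  using Hu_invol[of \<beta> \<alpha> y x] assms by (simp add: Hu_Hv_swap)


lemma one_plus_inv: "t > 0 \<Longrightarrow> 1 + 1 / t = (1 + t) / (t::real)"
  by (simp add: field_simps)

lemma kernel_pos: "x > 0 \<Longrightarrow> p > 0 \<Longrightarrow> beta_prime_kernel lam a b p 1 x > 0"
proof -
  assume "x > 0" "p > 0"
  then have "1 + p * x > 0" "1 + 1 / x > 0" by (auto intro!: add_pos_pos)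
  then show ?thesis unfolding beta_prime_kernel_def using \<open>x > 0\<close> by (simp add: powr_gt_zero)
qed

lemma kernel_identity:
  assumes ab: "\<alpha> > 0" "\<beta> > 0" and xy: "x > 0" "y > 0"
  shows "beta_prime_kernel lam a b \<alpha> 1 x * beta_prime_kernel (- lam) a b \<beta> 1 y =
    (\<beta> / \<alpha>) powr lam * (Hu \<alpha> \<beta> x y * Hv \<alpha> \<beta> x y / (x * y)) *
    (beta_prime_kernel (- lam) a b \<alpha> 1 (Hu \<alpha> \<beta> x y) * beta_prime_kernel lam a b \<beta> 1 (Hv \<alpha> \<beta> x y))"
    (is "?L = ?R")
proof -
  define u where "u = Hu \<alpha> \<beta> x y"
  define v where "v = Hv \<alpha> \<beta> x y"
  define D1 where "D1 = 1 + x + y + \<beta> * x * y"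
  define D2 where "D2 = 1 + x + y + \<alpha> * x * y"
  define N1 where "N1 = \<beta> + \<alpha> * x + \<beta> * y + \<alpha> * \<beta> * x * y"
  define N2 where "N2 = \<alpha> + \<alpha> * x + \<beta> * y + \<alpha> * \<beta> * x * y"
  note F = H_facts[OF ab xy, folded D1_def D2_def N1_def N2_def u_def v_def]
  have up: "u > 0" using F(1-4) ab xy by (simp add: F(5))
  have vp: "v > 0" using F(1-4) ab xy by (simp add: F(6))
  have pos: "1 + \<alpha> * x > 0" "1 + \<beta> * y > 0" "1 + x > 0" "1 + y > 0"
    using ab xy by (auto intro!: add_pos_pos)
  have Lp: "?L > 0" using kernel_pos ab xy by (simp add: mult_pos_pos)
  have Rp: "?R > 0" unfolding u_def[symmetric] v_def[symmetric]
    using kernel_pos ab xy up vp by (simp add: mult_pos_pos)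
  have "ln ?L = ln ?R"
    unfolding u_def[symmetric] v_def[symmetric] beta_prime_kernel_def
    using up vp xy
    apply (simp only: if_True one_plus_inv mult_1)
    apply (simp only: F(7-10))
    apply (simp only: F(5,6))
    using F(1-4) pos ab xy
    apply (simp add: ln_mult ln_div)
    apply (simp add: field_simps)
    done
  then show ?thesis using Lp Rp by simp
qed



definition Dfun :: "real \<Rightarrow> real \<times> real \<Rightarrow> real" where
  "Dfun \<beta> p = 1 + fst p + snd p + \<beta> * fst p * snd p"
definition Nfun :: "real \<Rightarrow> real \<Rightarrow> real \<times> real \<Rightarrow> real" where
  "Nfun \<alpha> \<beta> p = \<beta> + \<alpha> * fst p + \<beta> * snd p + \<alpha> * \<beta> * fst p * snd p"

definition dux :: "real \<Rightarrow> real \<Rightarrow> real \<Rightarrow> real \<Rightarrow> real" where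
  "dux \<alpha> \<beta> x y = y * (1 + y) * (1 + \<beta> * y) * (\<alpha> - \<beta>) / (\<alpha> * (Dfun \<beta> (x, y))^2)"
definition duy :: "real \<Rightarrow> real \<Rightarrow> real \<Rightarrow> real \<Rightarrow> real" where
  "duy \<alpha> \<beta> x y = ((Nfun \<alpha> \<beta> (x, y) + \<beta> * y * (1 + \<alpha> * x)) * Dfun \<beta> (x, y)
      - y * Nfun \<alpha> \<beta> (x, y) * (1 + \<beta> * x)) / (\<alpha> * (Dfun \<beta> (x, y))^2)"

lemma Dfun_deriv[derivative_intros]: "(Dfun \<beta> has_derivative (\<lambda>h. fst h + snd h + \<beta> * (fst h * snd p + fst p * snd h))) (at p within S)"
  unfolding Dfun_def by (auto intro!: derivative_eq_intros simp: algebra_simps)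
lemma Nfun_deriv[derivative_intros]: "(Nfun \<alpha> \<beta> has_derivative (\<lambda>h. \<alpha> * fst h + \<beta> * snd h + \<alpha> * \<beta> * (fst h * snd p + fst p * snd h))) (at p within S)"
  unfolding Nfun_def by (auto intro!: derivative_eq_intros simp: algebra_simps)

lemma Hu_fun: "Hu \<alpha> \<beta> (fst p) (snd p) = snd p / \<alpha> * (Nfun \<alpha> \<beta> p / Dfun \<beta> p)"
  unfolding Hu_def Nfun_def Dfun_def ..

lemma Hu_deriv:
  assumes "\<alpha> > 0" "\<beta> > 0" "fst p > 0" "snd p > 0"
  shows "((\<lambda>p. Hu \<alpha> \<beta> (fst p) (snd p)) has_derivative
     (\<lambda>h. dux \<alpha> \<beta> (fst p) (snd p) * fst h + duy \<alpha> \<beta> (fst p) (snd p) * snd h)) (at p within S)"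
proof -
  obtain x y where p: "p = (x, y)" by (cases p)
  have D: "Dfun \<beta> (x, y) > 0" using assms p unfolding Dfun_def by (auto intro!: add_pos_pos)
  have e0: "\<alpha> * Dfun \<beta> (x, y) - Nfun \<alpha> \<beta> (x, y) = (\<alpha> - \<beta>) * (1 + y)"
    unfolding Dfun_def Nfun_def by (simp add: algebra_simps)
  then have e1: "y * (1 + \<beta> * y) * (\<alpha> * Dfun \<beta> (x, y) - Nfun \<alpha> \<beta> (x, y)) = y * (1 + y) * (1 + \<beta> * y) * (\<alpha> - \<beta>)"
    by (unfold e0) (simp add: algebra_simps)
  have ux: "dux \<alpha> \<beta> x y = y * (1 + \<beta> * y) * (\<alpha> * Dfun \<beta> (x, y) - Nfun \<alpha> \<beta> (x, y)) / (\<alpha> * (Dfun \<beta> (x, y))^2)"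
    unfolding dux_def e1 ..
  show ?thesis
    unfolding Hu_fun p fst_conv snd_conv ux
    using assms p D
    apply (auto intro!: derivative_eq_intros simp: fun_eq_iff)
    apply (simp add: duy_def field_simps power2_eq_square)
    apply (simp add: algebra_simps)?
    done
qed

lemma det_identity:
  assumes "\<alpha> > 0" "\<beta> > 0" "x > 0" "y > 0"
  shows "dux \<alpha> \<beta> x y * dux \<beta> \<alpha> y x - duy \<alpha> \<beta> x y * duy \<beta> \<alpha> y x = - (Hu \<alpha> \<beta> x y * Hu \<beta> \<alpha> y x / (x * y))"
proof -
  define D1 where "D1 = 1 + x + y + \<beta> * x * y"
  define D2 where "D2 = 1 + y + x + \<alpha> * y * x"
  define N1 where "N1 = \<beta> + \<alpha> * x + \<beta> * y + \<alpha> * \<beta> * x * y"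
  define N2 where "N2 = \<alpha> + \<beta> * y + \<alpha> * x + \<beta> * \<alpha> * y * x"
  have D: "D1 > 0" "D2 > 0" using assms unfolding D1_def D2_def by (auto intro!: add_pos_pos)
  have P: "(y * (1 + y) * (1 + \<beta> * y) * (\<alpha> - \<beta>)) * (x * (1 + x) * (1 + \<alpha> * x) * (\<beta> - \<alpha>))
     - ((N1 + \<beta> * y * (1 + \<alpha> * x)) * D1 - y * N1 * (1 + \<beta> * x)) * ((N2 + \<alpha> * x * (1 + \<beta> * y)) * D2 - x * N2 * (1 + \<alpha> * y))
     = - (N1 * N2 * D1 * D2)"
    unfolding D1_def D2_def N1_def N2_def by (simp add: algebra_simps)
  have gen: "\<And>a p b q c e :: real. a/p*(b/q) - c/p*(e/q) = (a*b-c*e)/(p*q)"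
    by (simp add: diff_divide_distrib)
  have e: "dux \<alpha> \<beta> x y * dux \<beta> \<alpha> y x - duy \<alpha> \<beta> x y * duy \<beta> \<alpha> y x
     = ((y * (1 + y) * (1 + \<beta> * y) * (\<alpha> - \<beta>)) * (x * (1 + x) * (1 + \<alpha> * x) * (\<beta> - \<alpha>))
     - ((N1 + \<beta> * y * (1 + \<alpha> * x)) * D1 - y * N1 * (1 + \<beta> * x)) * ((N2 + \<alpha> * x * (1 + \<beta> * y)) * D2 - x * N2 * (1 + \<alpha> * y)))
     / ((\<alpha> * D1^2) * (\<beta> * D2^2))"
    unfolding dux_def duy_def Dfun_def Nfun_def fst_conv snd_conv D1_def[symmetric] D2_def[symmetric] N1_def[symmetric] N2_def[symmetric]
    by (simp only: gen)
  have h: "Hu \<alpha> \<beta> x y * Hu \<beta> \<alpha> y x / (x * y) = N1 * N2 / (\<alpha> * \<beta> * D1 * D2)"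
    unfolding Hu_def D1_def[symmetric] D2_def[symmetric] N1_def[symmetric] N2_def[symmetric]
    using D assms by (simp add: field_simps)
  have f: "- (N1 * N2 * D1 * D2) / (\<alpha> * \<beta> * D1^2 * D2^2) = - (N1 * N2 / (\<alpha> * \<beta> * D1 * D2))"
    using D assms by (simp add: field_simps power2_eq_square)
  show ?thesis unfolding e h P using D assms by (simp add: field_simps power2_eq_square)
qed



definition psi :: "real^2 \<Rightarrow> real \<times> real" where "psi z = (z$1, z$2)"
definition phi :: "real \<times> real \<Rightarrow> real^2" where "phi p = vector [fst p, snd p]"

lemma psi_phi[simp]: "psi (phi p) = p" by (simp add: psi_def phi_def)
lemma phi_psi[simp]: "phi (psi z) = z"
  by (simp add: psi_def phi_def vec_eq_iff forall_2)
lemma linear_psi: "bounded_linear psi"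
  unfolding psi_def by (intro bounded_linear_Pair bounded_linear_vec_nth)
lemma linear_phi: "bounded_linear phi"
proof -
  have "linear phi"
    by (rule linearI) (auto simp: phi_def vec_eq_iff forall_2)
  then show ?thesis using linear_conv_bounded_linear by blast
qed
lemma psi_meas[measurable]: "psi \<in> borel_measurable borel"
  using linear_psi by (intro borel_measurable_continuous_onI linear_continuous_on)
lemma phi_meas[measurable]: "phi \<in> borel_measurable borel"
  using linear_phi by (intro borel_measurable_continuous_onI linear_continuous_on)

lemma Basis_vec2: "(Basis :: (real^2) set) = {axis 1 1, axis 2 1}"
  by (auto simp: Basis_vec_def UNIV_2)
lemma axis12: "axis 1 (1::real) \<noteq> (axis 2 1 :: real^2)"
  by (simp add: axis_eq_axis)
lemma Basis_pair: "(Basis :: (real\<times>real) set) = {(1,0), (0,1)}"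
  by (auto simp: Basis_prod_def)

lemma mem_box_pair: "x \<in> box l u \<longleftrightarrow> fst l < fst x \<and> fst x < fst u \<and> snd l < snd x \<and> snd x < snd (u::real\<times>real)"
  by (auto simp: box_def Basis_pair inner_prod_def)

lemma lborel_psi: "distr lborel borel psi = (lborel :: (real\<times>real) measure)"
proof (rule sym, rule lborel_eqI)
  fix l u :: "real \<times> real"
  assume le: "\<And>b. b \<in> Basis \<Longrightarrow> l \<bullet> b \<le> u \<bullet> b"
  then have le1: "fst l \<le> fst u" and le2: "snd l \<le> snd u"
    using le[of "(1,0)"] le[of "(0,1)"] by (auto simp: Basis_pair inner_prod_def)
  have pre: "psi -` box l u = box (phi l) (phi u)"
    by (auto simp: psi_def phi_def mem_box_cart forall_2 mem_box_pair)
  have "emeasure (distr lborel borel psi) (box l u) = emeasure lborel (psi -` box l u)"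
    by (subst emeasure_distr) auto
  also have "\<dots> = ennreal ((fst u - fst l) * (snd u - snd l))"
    unfolding pre using le1 le2
    by (simp add: emeasure_lborel_box_eq Basis_vec2 axis12 inner_axis phi_def cart_eq_inner_axis[symmetric])
  also have "\<dots> = ennreal (\<Prod>b\<in>Basis. (u - l) \<bullet> b)"
    by (simp add: Basis_pair inner_prod_def)
  finally show "emeasure (distr lborel borel psi) (box l u) = (\<Prod>b\<in>Basis. (u - l) \<bullet> b)" .
qed simp

lemma nn_integral_psi:
  assumes [measurable]: "h \<in> borel_measurable borel"
  shows "(\<integral>\<^sup>+p. h p \<partial>(lborel :: (real\<times>real) measure)) = (\<integral>\<^sup>+z. h (psi z) \<partial>lborel)"
  by (subst lborel_psi[symmetric]) (simp add: nn_integral_distr)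

lemma cov_nn:
  fixes f :: "real^2 \<Rightarrow> real" and g :: "real^2 \<Rightarrow> real^2"
  assumes S: "S \<in> sets lebesgue"
   and der: "\<And>x. x \<in> S \<Longrightarrow> (g has_derivative g' x) (at x within S)"
   and inj: "inj_on g S"
   and f0: "\<And>x. 0 \<le> f x"
   and fm: "(\<lambda>x. indicator (g ` S) x * f x) \<in> borel_measurable borel"
   and Fm: "(\<lambda>x. indicator S x * (\<bar>det (matrix (g' x))\<bar> * f (g x))) \<in> borel_measurable borel"
  shows "(\<integral>\<^sup>+x. ennreal (indicator (g ` S) x * f x) \<partial>lborel)
       = (\<integral>\<^sup>+x. ennreal (indicator S x * (\<bar>det (matrix (g' x))\<bar> * f (g x))) \<partial>lborel)"
proof -
  define F where "F x = \<bar>det (matrix (g' x))\<bar> * f (g x)" for x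
  have F0: "0 \<le> F x" for x using f0 by (simp add: F_def)
  have cv: "(\<lambda>x. \<bar>det (matrix (g' x))\<bar> *\<^sub>R vec (f (g x)) :: real^1) absolutely_integrable_on S \<and>
           integral S (\<lambda>x. \<bar>det (matrix (g' x))\<bar> *\<^sub>R vec (f (g x)) :: real^1) = b
     \<longleftrightarrow> (\<lambda>x. vec (f x) :: real^1) absolutely_integrable_on (g ` S) \<and> integral (g ` S) (\<lambda>x. vec (f x) :: real^1) = b" for b
    by (rule has_absolute_integral_change_of_variables[OF S der inj])
  have iff: "F absolutely_integrable_on S \<and> integral S F = c \<longleftrightarrow> f absolutely_integrable_on (g ` S) \<and> integral (g ` S) f = c" for c
    using cv[of "vec c"] unfolding absolutely_integrable_on_1_iff integral_on_1_eq
    by (simp add: F_def[abs_def] vec_eq_iff)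
  show ?thesis
  proof (cases "f absolutely_integrable_on (g ` S)")
    case True
    define c where "c = integral (g ` S) f"
    then have Fi: "F absolutely_integrable_on S" "integral S F = c" using iff True by auto
    have "(f has_integral c) (g ` S)" using True c_def
      by (simp add: absolutely_integrable_on_def has_integral_integral)
    then have "integral\<^sup>N lborel (\<lambda>x. indicator (g ` S) x * f x) = c"
      using f0 by (intro nn_integral_has_integral_lebesgue) auto
    moreover have "(F has_integral c) S" using Fi
      by (metis absolutely_integrable_on_def has_integral_integral)
    then have "integral\<^sup>N lborel (\<lambda>x. indicator S x * F x) = c"
      using F0 by (intro nn_integral_has_integral_lebesgue) auto
    ultimately show ?thesis by (simp add: F_def)
  next
    case False
    then have nF: "\<not> F absolutely_integrable_on S" using iff by blast
    have inf: "(\<integral>\<^sup>+x. ennreal (indicator T x * h x) \<partial>lborel) = \<infinity>"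
      if hm: "(\<lambda>x. indicator T x * h x) \<in> borel_measurable borel" and h0: "\<And>x. 0 \<le> h x"
        and ni: "\<not> h absolutely_integrable_on T" for T and h :: "real^2 \<Rightarrow> real"
    proof (rule ccontr)
      assume "(\<integral>\<^sup>+x. ennreal (indicator T x * h x) \<partial>lborel) \<noteq> \<infinity>"
      then have "integrable lborel (\<lambda>x. indicator T x * h x)"
        using hm h0 by (intro integrableI_bounded) (auto simp: abs_mult top.not_eq_extremum)
      then have "integrable lebesgue (\<lambda>x. indicator T x * h x)"
        using hm by (simp add: integrable_completion)
      then have "h absolutely_integrable_on T"
        by (simp add: set_integrable_def)
      with ni show False by simp
    qed
    have "(\<integral>\<^sup>+x. ennreal (indicator (g ` S) x * f x) \<partial>lborel) = \<infinity>"
      using inf[OF fm f0 False] .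
    moreover have "(\<integral>\<^sup>+x. ennreal (indicator S x * F x) \<partial>lborel) = \<infinity>"
      using inf[of S F] Fm F0 nF by (simp add: F_def)
    ultimately show ?thesis by (simp add: F_def)
  qed
qed

lemma cov_pair:
  fixes G :: "real\<times>real \<Rightarrow> real\<times>real" and f :: "real\<times>real \<Rightarrow> real" and J :: "real\<times>real \<Rightarrow> real"
  assumes S: "S \<in> sets borel"
    and der: "\<And>p. p \<in> S \<Longrightarrow> (G has_derivative G' p) (at p within S)"
    and J: "\<And>p. p \<in> S \<Longrightarrow> J p = fst (G' p (1,0)) * snd (G' p (0,1)) - fst (G' p (0,1)) * snd (G' p (1,0))"
    and inj: "inj_on G S"
    and f0: "\<And>p. 0 \<le> f p"
    and fm: "(\<lambda>p. indicator (G ` S) p * f p) \<in> borel_measurable borel"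
    and Fm: "(\<lambda>p. indicator S p * (\<bar>J p\<bar> * f (G p))) \<in> borel_measurable borel"
  shows "(\<integral>\<^sup>+p. ennreal (indicator (G ` S) p * f p) \<partial>lborel)
       = (\<integral>\<^sup>+p. ennreal (indicator S p * (\<bar>J p\<bar> * f (G p))) \<partial>lborel)"
proof -
  define S2 where "S2 = psi -` S"
  define g where "g z = phi (G (psi z))" for z
  define g' where "g' z = (\<lambda>h. phi (G' (psi z) (psi h)))" for z
  have S2b: "S2 \<in> sets borel" unfolding S2_def
    using measurable_sets[OF psi_meas S] by simp
  then have S2: "S2 \<in> sets lebesgue" by (simp add: sets_completionI_sets)
  have psiS2: "psi ` S2 = S" unfolding S2_def
    by (auto simp: image_iff) (metis psi_phi)
  have der2: "(g has_derivative g' z) (at z within S2)" if "z \<in> S2" for z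
  proof -
    have "(psi has_derivative psi) (at z within S2)"
      by (rule bounded_linear_imp_has_derivative[OF linear_psi])
    moreover have "(G has_derivative G' (psi z)) (at (psi z) within psi ` S2)"
      using der[of "psi z"] that psiS2 by (simp add: S2_def)
    ultimately have "((\<lambda>z. G (psi z)) has_derivative (\<lambda>h. G' (psi z) (psi h))) (at z within S2)"
      by (rule has_derivative_in_compose)
    then show ?thesis unfolding g_def g'_def
      by (rule has_derivative_compose) (rule bounded_linear_imp_has_derivative[OF linear_phi])
  qed
  have injg: "inj_on g S2"
  proof (rule inj_onI)
    fix z w assume "z \<in> S2" "w \<in> S2" "g z = g w"
    then have "psi (phi (G (psi z))) = psi (phi (G (psi w)))" by (simp add: g_def)
    then have "G (psi z) = G (psi w)" by simp
    then have "psi z = psi w" using inj \<open>z \<in> S2\<close> \<open>w \<in> S2\<close> by (auto simp: S2_def inj_on_def)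
    then show "z = w" by (metis phi_psi)
  qed
  have psi_ax: "psi (axis 1 1) = (1, 0)" "psi (axis 2 1) = (0, 1)"
    by (simp_all add: psi_def axis_def)
  have phi_nth: "phi q $ 1 = fst q" "phi q $ 2 = snd q" for q by (simp_all add: phi_def)
  have detJ: "det (matrix (g' z)) = J (psi z)" if "z \<in> S2" for z
    using J[of "psi z"] that
    by (simp add: det_2 matrix_def g'_def psi_ax phi_nth S2_def)
  have gS2: "g ` S2 = psi -` (G ` S)"
  proof
    show "g ` S2 \<subseteq> psi -` (G ` S)" by (auto simp: g_def S2_def)
    show "psi -` (G ` S) \<subseteq> g ` S2"
    proof
      fix z assume "z \<in> psi -` (G ` S)"
      then obtain p where p: "p \<in> S" "psi z = G p" by auto
      then have "phi p \<in> S2" "g (phi p) = z" by (auto simp: S2_def g_def) (metis phi_psi)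
      then show "z \<in> g ` S2" by (metis image_eqI)
    qed
  qed
  have eqF: "indicator S2 z * (\<bar>det (matrix (g' z))\<bar> * f (psi (g z))) = indicator S (psi z) * (\<bar>J (psi z)\<bar> * f (G (psi z)))" for z
    by (cases "z \<in> S2") (auto simp: detJ g_def S2_def)
  have eqf: "indicator (g ` S2) z * f (psi z) = indicator (G ` S) (psi z) * f (psi z)" for z
    by (simp add: gS2 indicator_def)
  have "(\<integral>\<^sup>+p. ennreal (indicator (G ` S) p * f p) \<partial>lborel) = (\<integral>\<^sup>+z. ennreal (indicator (G ` S) (psi z) * f (psi z)) \<partial>lborel)"
    by (intro nn_integral_psi measurable_compose[OF fm measurable_ennreal])
  also have "\<dots> = (\<integral>\<^sup>+z. ennreal (indicator (g ` S2) z * f (psi z)) \<partial>lborel)"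
    by (simp add: eqf)
  also have "\<dots> = (\<integral>\<^sup>+z. ennreal (indicator S2 z * (\<bar>det (matrix (g' z))\<bar> * f (psi (g z)))) \<partial>lborel)"
  proof (rule cov_nn[OF S2 der2 injg, of "\<lambda>z. f (psi z)"])
    show "0 \<le> f (psi x)" for x by (rule f0)
    show "(\<lambda>x. indicator (g ` S2) x * f (psi x)) \<in> borel_measurable borel"
      unfolding eqf using measurable_compose[OF psi_meas fm] by (simp add: o_def)
    show "(\<lambda>x. indicator S2 x * (\<bar>det (matrix (g' x))\<bar> * f (psi (g x)))) \<in> borel_measurable borel"
      unfolding eqF using measurable_compose[OF psi_meas Fm] by (simp add: o_def)
  qed
  also have "\<dots> = (\<integral>\<^sup>+z. ennreal (indicator S (psi z) * (\<bar>J (psi z)\<bar> * f (G (psi z)))) \<partial>lborel)"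
    by (simp add: eqF)
  also have "\<dots> = (\<integral>\<^sup>+p. ennreal (indicator S p * (\<bar>J p\<bar> * f (G p))) \<partial>lborel)"
    by (intro nn_integral_psi[symmetric] measurable_compose[OF Fm measurable_ennreal])
  finally show ?thesis .
qed




lemma kernel_nonneg: "beta_prime_kernel lam a b p q x \<ge> 0"
  unfolding beta_prime_kernel_def by auto

lemma kernel_zero: "x \<le> 0 \<Longrightarrow> beta_prime_kernel lam a b p q x = 0"
  unfolding beta_prime_kernel_def by auto

lemma kernel_meas[measurable]: "beta_prime_kernel lam a b p q \<in> borel_measurable borel"
  unfolding beta_prime_kernel_def[abs_def] by measurable

lemma H_eq: "H_I_plus \<alpha> \<beta> p = (Hu \<alpha> \<beta> (fst p) (snd p), Hv \<alpha> \<beta> (fst p) (snd p))"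
  by (cases p) (simp add: H_I_plus_def Hu_def Hv_def)

lemma Hu_meas[measurable]: "(\<lambda>p. Hu \<alpha> \<beta> (fst p) (snd p)) \<in> borel_measurable borel"
  unfolding Hu_def by (subst borel_prod[symmetric]) measurable
lemma Hv_meas[measurable]: "(\<lambda>p. Hv \<alpha> \<beta> (fst p) (snd p)) \<in> borel_measurable borel"
  unfolding Hv_def by (subst borel_prod[symmetric]) measurable

lemma H_fun: "H_I_plus \<alpha> \<beta> = (\<lambda>p. (Hu \<alpha> \<beta> (fst p) (snd p), Hv \<alpha> \<beta> (fst p) (snd p)))"
  by (rule ext) (simp add: H_eq)

lemma H_meas[measurable]: "H_I_plus \<alpha> \<beta> \<in> borel_measurable borel"
  unfolding H_fun by (subst (1) borel_prod[symmetric]) measurable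

lemma H_invol: "\<alpha> > 0 \<Longrightarrow> \<beta> > 0 \<Longrightarrow> fst p > 0 \<Longrightarrow> snd p > 0 \<Longrightarrow> H_I_plus \<alpha> \<beta> (H_I_plus \<alpha> \<beta> p) = p"
  by (simp add: H_eq Hu_invol Hv_invol)

lemma H_pos: "\<alpha> > 0 \<Longrightarrow> \<beta> > 0 \<Longrightarrow> fst p > 0 \<Longrightarrow> snd p > 0 \<Longrightarrow>
    fst (H_I_plus \<alpha> \<beta> p) > 0 \<and> snd (H_I_plus \<alpha> \<beta> p) > 0"
  unfolding H_eq Hu_def Hv_def by (auto intro!: mult_pos_pos divide_pos_pos add_pos_pos)

lemma Hv_deriv:
  assumes "\<alpha> > 0" "\<beta> > 0" "fst p > 0" "snd p > 0"
  shows "((\<lambda>p. Hv \<alpha> \<beta> (fst p) (snd p)) has_derivative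
     (\<lambda>h. dux \<beta> \<alpha> (snd p) (fst p) * snd h + duy \<beta> \<alpha> (snd p) (fst p) * fst h)) (at p within S)"
proof -
  have sw: "((\<lambda>p. (snd p, fst p)) has_derivative (\<lambda>h. (snd h, fst h))) (at p within S)"
    by (auto intro!: derivative_eq_intros)
  have "((\<lambda>q. Hu \<beta> \<alpha> (fst q) (snd q)) has_derivative
     (\<lambda>h. dux \<beta> \<alpha> (snd p) (fst p) * fst h + duy \<beta> \<alpha> (snd p) (fst p) * snd h)) (at (snd p, fst p) within (\<lambda>p. (snd p, fst p)) ` S)"
    using Hu_deriv[of \<beta> \<alpha> "(snd p, fst p)"] assms by simp
  from has_derivative_in_compose[OF sw this] show ?thesis
    by (simp add: Hu_Hv_swap)
qed

lemma H_deriv: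
  assumes "\<alpha> > 0" "\<beta> > 0" "fst p > 0" "snd p > 0"
  shows "(H_I_plus \<alpha> \<beta> has_derivative
     (\<lambda>h. (dux \<alpha> \<beta> (fst p) (snd p) * fst h + duy \<alpha> \<beta> (fst p) (snd p) * snd h,
           dux \<beta> \<alpha> (snd p) (fst p) * snd h + duy \<beta> \<alpha> (snd p) (fst p) * fst h))) (at p within S)"
  unfolding H_fun by (intro has_derivative_Pair Hu_deriv Hv_deriv assms)




lemma Hu_meas2[measurable]: "(\<lambda>p. Hu \<alpha> \<beta> (fst p) (snd p)) \<in> borel_measurable (borel \<Otimes>\<^sub>M borel)"
  unfolding Hu_def by measurable
lemma Hv_meas2[measurable]: "(\<lambda>p. Hv \<alpha> \<beta> (fst p) (snd p)) \<in> borel_measurable (borel \<Otimes>\<^sub>M borel)"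
  unfolding Hv_def by measurable
lemma H_meas2[measurable]: "H_I_plus \<alpha> \<beta> \<in> (borel \<Otimes>\<^sub>M borel) \<rightarrow>\<^sub>M (borel \<Otimes>\<^sub>M borel)"
  unfolding H_fun by measurable

lemma key_pushforward:
  fixes \<alpha> \<beta> lam a b IX IY :: real
  assumes ab: "\<alpha> > 0" "\<beta> > 0" and I: "IX > 0" "IY > 0"
  defines "c \<equiv> (\<beta> / \<alpha>) powr lam / (IX * IY)"
  shows "distr (density lborel (\<lambda>p. ennreal (beta_prime_kernel lam a b \<alpha> 1 (fst p) / IX * (beta_prime_kernel (- lam) a b \<beta> 1 (snd p) / IY))))
           lborel (H_I_plus \<alpha> \<beta>)
       = density lborel (\<lambda>q. ennreal (c * beta_prime_kernel (- lam) a b \<alpha> 1 (fst q) * beta_prime_kernel lam a b \<beta> 1 (snd q)))"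
    (is "distr (density lborel ?f) lborel ?H = density lborel ?g")
proof (rule measure_eqI)
  show "sets (distr (density lborel ?f) lborel ?H) = sets (density lborel ?g)" by simp
  fix A assume "A \<in> sets (distr (density lborel ?f) lborel ?H)"
  then have A[measurable]: "A \<in> sets borel" by simp
  then have A2[measurable]: "A \<in> sets (borel \<Otimes>\<^sub>M borel)" by (simp only: borel_prod)
  define S where "S = ({0<..} \<times> {0<..} :: (real\<times>real) set)"
  have S[measurable]: "S \<in> sets borel" unfolding S_def
    by (intro borel_open open_Times open_greaterThan)
  then have S2[measurable]: "S \<in> sets (borel \<Otimes>\<^sub>M borel)" by (simp only: borel_prod)
  have Smem: "p \<in> S \<longleftrightarrow> 0 < fst p \<and> 0 < snd p" for p by (cases p) (auto simp: S_def)
  define J where "J p = - (Hu \<alpha> \<beta> (fst p) (snd p) * Hv \<alpha> \<beta> (fst p) (snd p) / (fst p * snd p))" for p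
  define g where "g q = c * beta_prime_kernel (- lam) a b \<alpha> 1 (fst q) * beta_prime_kernel lam a b \<beta> 1 (snd q) * indicator A q" for q
  have c0: "c \<ge> 0" unfolding c_def using I by simp
  have g0: "g q \<ge> 0" for q unfolding g_def using c0 kernel_nonneg by simp
  have gS: "q \<notin> S \<Longrightarrow> g q = 0" for q
    unfolding g_def Smem by (auto simp: kernel_zero not_less)
  have HS: "?H ` S = S"
  proof
    show "?H ` S \<subseteq> S" using H_pos ab by (auto simp: Smem)
    show "S \<subseteq> ?H ` S"
    proof
      fix q assume q: "q \<in> S"
      then have "?H q \<in> S" "?H (?H q) = q" using H_pos H_invol ab by (auto simp: Smem)
      then show "q \<in> ?H ` S" by (metis image_eqI)
    qed
  qed
  have inj: "inj_on ?H S"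
  proof (rule inj_onI)
    fix p q assume "p \<in> S" "q \<in> S" "?H p = ?H q"
    note pq = this
    have "p = ?H (?H p)" using H_invol[of \<alpha> \<beta> p] ab pq(1) unfolding Smem by simp
    also have "\<dots> = ?H (?H q)" using pq(3) by simp
    also have "\<dots> = q" using H_invol[of \<alpha> \<beta> q] ab pq(2) unfolding Smem by simp
    finally show "p = q" .
  qed
  have Jabs: "\<bar>J p\<bar> = Hu \<alpha> \<beta> (fst p) (snd p) * Hv \<alpha> \<beta> (fst p) (snd p) / (fst p * snd p)" if "p \<in> S" for p
    using H_pos[of \<alpha> \<beta> p] ab that by (simp add: J_def Smem H_eq)
  have pw: "?f p * indicator (?H -` A) p = ennreal (indicator S p * (\<bar>J p\<bar> * g (?H p)))" for p
  proof (cases "p \<in> S")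
    case True
    then have xy: "fst p > 0" "snd p > 0" by (auto simp: Smem)
    have "beta_prime_kernel lam a b \<alpha> 1 (fst p) / IX * (beta_prime_kernel (- lam) a b \<beta> 1 (snd p) / IY)
        = \<bar>J p\<bar> * (c * beta_prime_kernel (- lam) a b \<alpha> 1 (fst (?H p)) * beta_prime_kernel lam a b \<beta> 1 (snd (?H p)))"
      using kernel_identity[OF ab xy, of lam a b] Jabs[OF True] I
      by (simp add: c_def H_eq field_simps)
    then show ?thesis using True
      by (cases "?H p \<in> A") (simp_all add: g_def indicator_def)
  next
    case False
    then have "fst p \<le> 0 \<or> snd p \<le> 0" by (auto simp: Smem)
    then have "?f p = 0" by (auto simp: kernel_zero)
    then show ?thesis using False by simp
  qed
  have fmeas: "?f \<in> borel_measurable borel" by (subst borel_prod[symmetric]) measurable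
  have gmeas: "?g \<in> borel_measurable borel" by (subst borel_prod[symmetric]) measurable
  have pre: "?H -` A \<in> sets borel" using measurable_sets[OF H_meas A] by simp
  have "emeasure (distr (density lborel ?f) lborel ?H) A = emeasure (density lborel ?f) (?H -` A)"
    by (subst emeasure_distr) auto
  also have "\<dots> = (\<integral>\<^sup>+p. ?f p * indicator (?H -` A) p \<partial>lborel)"
    using pre fmeas by (subst emeasure_density) auto
  also have "\<dots> = (\<integral>\<^sup>+p. ennreal (indicator S p * (\<bar>J p\<bar> * g (?H p))) \<partial>lborel)"
    by (rule nn_integral_cong) (rule pw)
  also have "\<dots> = (\<integral>\<^sup>+q. ennreal (indicator (?H ` S) q * g q) \<partial>lborel)"
  proof (rule cov_pair[symmetric, OF S _ _ inj g0])
    fix p assume "p \<in> S"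
    then have xy: "fst p > 0" "snd p > 0" by (auto simp: Smem)
    show "(?H has_derivative (\<lambda>h. (dux \<alpha> \<beta> (fst p) (snd p) * fst h + duy \<alpha> \<beta> (fst p) (snd p) * snd h,
           dux \<beta> \<alpha> (snd p) (fst p) * snd h + duy \<beta> \<alpha> (snd p) (fst p) * fst h))) (at p within S)"
      by (rule H_deriv[OF ab xy])
    show "J p = fst ((\<lambda>h. (dux \<alpha> \<beta> (fst p) (snd p) * fst h + duy \<alpha> \<beta> (fst p) (snd p) * snd h,
           dux \<beta> \<alpha> (snd p) (fst p) * snd h + duy \<beta> \<alpha> (snd p) (fst p) * fst h)) (1, 0)) *
          snd ((\<lambda>h. (dux \<alpha> \<beta> (fst p) (snd p) * fst h + duy \<alpha> \<beta> (fst p) (snd p) * snd h,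
           dux \<beta> \<alpha> (snd p) (fst p) * snd h + duy \<beta> \<alpha> (snd p) (fst p) * fst h)) (0, 1)) -
          fst ((\<lambda>h. (dux \<alpha> \<beta> (fst p) (snd p) * fst h + duy \<alpha> \<beta> (fst p) (snd p) * snd h,
           dux \<beta> \<alpha> (snd p) (fst p) * snd h + duy \<beta> \<alpha> (snd p) (fst p) * fst h)) (0, 1)) *
          snd ((\<lambda>h. (dux \<alpha> \<beta> (fst p) (snd p) * fst h + duy \<alpha> \<beta> (fst p) (snd p) * snd h,
           dux \<beta> \<alpha> (snd p) (fst p) * snd h + duy \<beta> \<alpha> (snd p) (fst p) * fst h)) (1, 0))"
      using det_identity[OF ab xy] by (simp add: J_def Hu_Hv_swap)
  next
    show "(\<lambda>q. indicator (?H ` S) q * g q) \<in> borel_measurable borel"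
      unfolding HS g_def by (subst borel_prod[symmetric]) measurable
    show "(\<lambda>p. indicator S p * (\<bar>J p\<bar> * g (?H p))) \<in> borel_measurable borel"
      unfolding g_def J_def by (subst borel_prod[symmetric]) measurable
  qed
  also have "\<dots> = (\<integral>\<^sup>+q. ?g q * indicator A q \<partial>lborel)"
  proof (rule nn_integral_cong)
    fix q
    show "ennreal (indicator (?H ` S) q * g q) = ?g q * indicator A q"
      using gS[of q] c0 kernel_nonneg
      by (cases "q \<in> S"; cases "q \<in> A") (simp_all add: HS g_def indicator_def)
  qed
  also have "\<dots> = emeasure (density lborel ?g) A"
    by (subst emeasure_density) (use gmeas in auto)
  finally show "emeasure (distr (density lborel ?f) lborel ?H) A = emeasure (density lborel ?g) A" .
qed




lemma dens_norm:
  assumes "prob_space M" "distributed M lborel Z (\<lambda>x. ennreal (beta_prime_density l a b p q x))"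
  shows "integral\<^sup>L lborel (beta_prime_kernel l a b p q) > 0"
proof (rule ccontr)
  have "integral\<^sup>L lborel (beta_prime_kernel l a b p q) \<ge> 0"
    by (rule integral_nonneg_AE) (simp add: kernel_nonneg)
  moreover assume "\<not> integral\<^sup>L lborel (beta_prime_kernel l a b p q) > 0"
  ultimately have I0: "integral\<^sup>L lborel (beta_prime_kernel l a b p q) = 0" by simp
  have "distr M lborel Z = density lborel (\<lambda>x. 0)"
    using distributed_distr_eq_density[OF assms(2)] by (simp add: beta_prime_density_def I0)
  moreover have "prob_space (distr M lborel Z)"
    by (rule prob_space.prob_space_distr[OF assms(1) distributed_measurable[OF assms(2)]])
  ultimately have "prob_space (density (lborel::real measure) (\<lambda>x. 0::ennreal))" by simp
  then have "emeasure (density (lborel::real measure) (\<lambda>x. 0::ennreal)) (space (density (lborel::real measure) (\<lambda>x. 0::ennreal))) = 1"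
    by (rule prob_space.emeasure_space_1)
  then show False by (simp add: emeasure_density)
qed

lemma normalize:
  fixes k :: "real \<Rightarrow> real"
  assumes km[measurable]: "k \<in> borel_measurable borel" and k0: "\<And>x. k x \<ge> 0"
    and fin: "(\<integral>\<^sup>+x. ennreal (k x) \<partial>lborel) = ennreal r" and r0: "r \<ge> 0"
  shows "integral\<^sup>L lborel k = r"
  using has_bochner_integral_nn_integral[of k lborel r] assms
  by (simp add: has_bochner_integral_integral_eq)

lemma prob_density:
  fixes k :: "real \<Rightarrow> real"
  assumes km[measurable]: "k \<in> borel_measurable borel" and k0: "\<And>x. k x \<ge> 0"
    and fin: "(\<integral>\<^sup>+x. ennreal (k x) \<partial>lborel) = ennreal r" and r0: "r > 0"
  shows "prob_space (density lborel (\<lambda>x. ennreal (k x / r)))"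
proof (rule prob_spaceI)
  have "(\<integral>\<^sup>+x. ennreal (k x / r) \<partial>lborel) = (\<integral>\<^sup>+x. ennreal (k x) * ennreal (1 / r) \<partial>lborel)"
    using k0 r0 by (intro nn_integral_cong) (simp add: ennreal_mult[symmetric])
  also have "\<dots> = ennreal r * ennreal (1 / r)" by (simp add: nn_integral_multc fin)
  also have "\<dots> = 1" using r0 by (simp add: ennreal_mult[symmetric])
  finally show "emeasure (density lborel (\<lambda>x. ennreal (k x / r))) (space (density lborel (\<lambda>x. ennreal (k x / r)))) = 1"
    by (simp add: emeasure_density)
qed

theorem theorem1p1:
  fixes M :: "'a measure" and X Y :: "'a \<Rightarrow> real" and \<alpha> \<beta> lam a b :: real
  assumes "prob_space M"
    and "\<alpha> > 0" and "\<beta> > 0" and "a > 0" and "b > 0"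
    and "- min a b < lam / 2" and "lam / 2 < min a b"
    and "prob_space.indep_var M borel X borel Y"
    and "distributed M lborel X (\<lambda>x. ennreal (beta_prime_density lam a b \<alpha> 1 x))"
    and "distributed M lborel Y (\<lambda>x. ennreal (beta_prime_density (- lam) a b \<beta> 1 x))"
  shows "prob_space.indep_var M borel (\<lambda>\<omega>. fst (H_I_plus \<alpha> \<beta> (X \<omega>, Y \<omega>)))
                               borel (\<lambda>\<omega>. snd (H_I_plus \<alpha> \<beta> (X \<omega>, Y \<omega>)))
       \<and> distributed M lborel (\<lambda>\<omega>. fst (H_I_plus \<alpha> \<beta> (X \<omega>, Y \<omega>)))
           (\<lambda>x. ennreal (beta_prime_density (- lam) a b \<alpha> 1 x))
       \<and> distributed M lborel (\<lambda>\<omega>. snd (H_I_plus \<alpha> \<beta> (X \<omega>, Y \<omega>)))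
           (\<lambda>x. ennreal (beta_prime_density lam a b \<beta> 1 x))"
proof -
  interpret P: prob_space M by (rule assms(1))
  have ab: "\<alpha> > 0" "\<beta> > 0" using assms by auto
  define kX where "kX = beta_prime_kernel lam a b \<alpha> 1"
  define kY where "kY = beta_prime_kernel (- lam) a b \<beta> 1"
  define kU where "kU = beta_prime_kernel (- lam) a b \<alpha> 1"
  define kV where "kV = beta_prime_kernel lam a b \<beta> 1"
  have km[measurable]: "kX \<in> borel_measurable borel" "kY \<in> borel_measurable borel"
    "kU \<in> borel_measurable borel" "kV \<in> borel_measurable borel"
    unfolding kX_def kY_def kU_def kV_def by measurable
  have k0: "kX x \<ge> 0" "kY x \<ge> 0" "kU x \<ge> 0" "kV x \<ge> 0" for x
    unfolding kX_def kY_def kU_def kV_def by (simp_all add: kernel_nonneg)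
  define IX where "IX = integral\<^sup>L lborel kX"
  define IY where "IY = integral\<^sup>L lborel kY"
  have IX: "IX > 0" unfolding IX_def kX_def by (rule dens_norm[OF assms(1) assms(9)])
  have IY: "IY > 0" unfolding IY_def kY_def by (rule dens_norm[OF assms(1) assms(10)])
  define c where "c = (\<beta> / \<alpha>) powr lam / (IX * IY)"
  have c: "c > 0" using IX IY ab by (simp add: c_def)
  define XY where "XY \<omega> = (X \<omega>, Y \<omega>)" for \<omega>
  define UV where "UV \<omega> = H_I_plus \<alpha> \<beta> (X \<omega>, Y \<omega>)" for \<omega>
  have Xm[measurable]: "X \<in> borel_measurable M" using distributed_measurable[OF assms(9)] by simp
  have Ym[measurable]: "Y \<in> borel_measurable M" using distributed_measurable[OF assms(10)] by simp
  have XYm: "XY \<in> M \<rightarrow>\<^sub>M borel \<Otimes>\<^sub>M borel" unfolding XY_def by measurable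
  have UVm: "UV \<in> M \<rightarrow>\<^sub>M borel \<Otimes>\<^sub>M borel" unfolding UV_def by measurable
  have mcong: "measurable M (lborel \<Otimes>\<^sub>M lborel) = measurable M (borel \<Otimes>\<^sub>M borel)"
    by (intro measurable_cong_sets refl sets_pair_measure_cong) simp_all
  have XYm': "XY \<in> M \<rightarrow>\<^sub>M lborel" using XYm by (simp add: borel_prod)
  have UVm': "UV \<in> M \<rightarrow>\<^sub>M lborel" using UVm by (simp add: borel_prod)
  have UVm'': "UV \<in> M \<rightarrow>\<^sub>M lborel \<Otimes>\<^sub>M lborel" using UVm mcong by simp
  have dX: "distr M lborel X = density lborel (\<lambda>x. ennreal (kX x / IX))"
    using distributed_distr_eq_density[OF assms(9)] by (simp add: beta_prime_density_def kX_def IX_def)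
  have dY: "distr M lborel Y = density lborel (\<lambda>x. ennreal (kY x / IY))"
    using distributed_distr_eq_density[OF assms(10)] by (simp add: beta_prime_density_def kY_def IY_def)
  have ind: "distr M borel X \<Otimes>\<^sub>M distr M borel Y = distr M (borel \<Otimes>\<^sub>M borel) XY"
    using assms(8) P.indep_var_distribution_eq unfolding XY_def by blast
  have e1: "distr M borel X = distr M lborel X" by (rule distr_cong) simp_all
  have e2: "distr M borel Y = distr M lborel Y" by (rule distr_cong) simp_all
  have e3: "distr M (borel \<Otimes>\<^sub>M borel) XY = distr M (lborel \<Otimes>\<^sub>M lborel) XY"
    by (intro distr_cong refl sets_pair_measure_cong) simp_all
  have sfY: "sigma_finite_measure (density lborel (\<lambda>x. ennreal (kY x / IY)))"
  proof -
    have "prob_space (density lborel (\<lambda>x. ennreal (kY x / IY)))"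
      unfolding dY[symmetric] by (rule P.prob_space_distr) simp
    then show ?thesis by (rule prob_space_imp_sigma_finite)
  qed
  have "distr M (lborel \<Otimes>\<^sub>M lborel) XY = density lborel (\<lambda>x. ennreal (kX x / IX)) \<Otimes>\<^sub>M density lborel (\<lambda>x. ennreal (kY x / IY))"
    using ind e1 e2 e3 dX dY by simp
  also have "\<dots> = density (lborel \<Otimes>\<^sub>M lborel) (\<lambda>(x, y). ennreal (kX x / IX) * ennreal (kY y / IY))"
    by (rule pair_measure_density[OF _ _ sigma_finite_lborel sfY]) simp_all
  also have "\<dots> = density lborel (\<lambda>p. ennreal (kX (fst p) / IX * (kY (snd p) / IY)))"
  proof -
    have "(\<lambda>(x, y). ennreal (kX x / IX) * ennreal (kY y / IY)) = (\<lambda>p. ennreal (kX (fst p) / IX * (kY (snd p) / IY)))"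
      using k0 IX IY by (auto simp: fun_eq_iff ennreal_mult[symmetric])
    then show ?thesis unfolding lborel_prod by simp
  qed
  finally have joint: "distr M lborel XY = density lborel (\<lambda>p. ennreal (kX (fst p) / IX * (kY (snd p) / IY)))"
    unfolding lborel_prod .
  have "distr M lborel UV = distr (distr M lborel XY) lborel (H_I_plus \<alpha> \<beta>)"
  proof -
    have XYb: "XY \<in> M \<rightarrow>\<^sub>M borel" using XYm' by simp
    show ?thesis by (subst distr_distr) (auto simp: XYb UV_def[abs_def] XY_def o_def)
  qed
  also have "\<dots> = density lborel (\<lambda>q. ennreal (c * kU (fst q) * kV (snd q)))"
    unfolding joint kX_def kY_def kU_def kV_def c_def by (rule key_pushforward[OF ab IX IY])
  finally have distUV: "distr M lborel UV = density lborel (\<lambda>q. ennreal (c * kU (fst q) * kV (snd q)))" .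
  have probUV: "prob_space (density lborel (\<lambda>q. ennreal (c * kU (fst q) * kV (snd q))))"
    unfolding distUV[symmetric] by (rule P.prob_space_distr[OF UVm'])
  define KU where "KU = (\<integral>\<^sup>+x. ennreal (kU x) \<partial>lborel)"
  define KV where "KV = (\<integral>\<^sup>+x. ennreal (kV x) \<partial>lborel)"
  have gm2: "(\<lambda>q. ennreal (c * kU (fst q) * kV (snd q))) \<in> borel_measurable (lborel \<Otimes>\<^sub>M lborel)"
    by measurable
  have "1 = emeasure (density lborel (\<lambda>q. ennreal (c * kU (fst q) * kV (snd q)))) UNIV"
    using prob_space.emeasure_space_1[OF probUV] by simp
  also have "\<dots> = (\<integral>\<^sup>+q. ennreal (c * kU (fst q) * kV (snd q)) \<partial>(lborel \<Otimes>\<^sub>M lborel))"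
    using gm2 unfolding lborel_prod by (subst emeasure_density) simp_all
  also have "\<dots> = (\<integral>\<^sup>+x. \<integral>\<^sup>+y. ennreal (c * kU x * kV y) \<partial>lborel \<partial>lborel)"
    using lborel.nn_integral_fst[OF gm2] by simp
  also have "\<dots> = (\<integral>\<^sup>+x. ennreal (c * kU x) * KV \<partial>lborel)"
  proof (rule nn_integral_cong)
    fix x
    have "(\<integral>\<^sup>+y. ennreal (c * kU x * kV y) \<partial>lborel) = (\<integral>\<^sup>+y. ennreal (c * kU x) * ennreal (kV y) \<partial>lborel)"
      using c k0 by (intro nn_integral_cong) (simp add: ennreal_mult)
    also have "\<dots> = ennreal (c * kU x) * KV" unfolding KV_def by (rule nn_integral_cmult) simp
    finally show "(\<integral>\<^sup>+y. ennreal (c * kU x * kV y) \<partial>lborel) = ennreal (c * kU x) * KV" .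
  qed
  also have "\<dots> = (\<integral>\<^sup>+x. ennreal c * ennreal (kU x) \<partial>lborel) * KV"
    using c k0 by (subst nn_integral_multc) (simp_all add: ennreal_mult)
  also have "\<dots> = ennreal c * KU * KV" unfolding KU_def by (subst nn_integral_cmult) simp_all
  finally have one: "ennreal c * KU * KV = 1" by simp
  have KU0: "KU \<noteq> 0" "KV \<noteq> 0" using one by auto
  have KUt: "KU \<noteq> \<top>" "KV \<noteq> \<top>" using one KU0 c by (auto simp: ennreal_mult_top ennreal_top_mult)
  obtain rU where rU: "KU = ennreal rU" "rU \<ge> 0" using KUt(1) by (cases KU rule: ennreal_cases) auto
  obtain rV where rV: "KV = ennreal rV" "rV \<ge> 0" using KUt(2) by (cases KV rule: ennreal_cases) auto
  have crr: "c * rU * rV = 1"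
    using one rU rV c by (simp add: ennreal_mult[symmetric])
  have rpos: "rU > 0" "rV > 0" using crr rU(2) rV(2) c
    by (auto simp: order.order_iff_strict)
  have IU: "integral\<^sup>L lborel kU = rU" by (rule normalize[OF km(3) k0(3) rU(1)[unfolded KU_def] rU(2)])
  have IV: "integral\<^sup>L lborel kV = rV" by (rule normalize[OF km(4) k0(4) rV(1)[unfolded KV_def] rV(2)])
  define dU where "dU x = ennreal (beta_prime_density (- lam) a b \<alpha> 1 x)" for x
  define dV where "dV x = ennreal (beta_prime_density lam a b \<beta> 1 x)" for x
  have dU: "dU x = ennreal (kU x / rU)" for x
    unfolding dU_def beta_prime_density_def kU_def[symmetric] IU ..
  have dV: "dV x = ennreal (kV x / rV)" for x
    unfolding dV_def beta_prime_density_def kV_def[symmetric] IV ..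
  have dUm[measurable]: "dU \<in> borel_measurable borel" unfolding dU[abs_def] by measurable
  have dVm[measurable]: "dV \<in> borel_measurable borel" unfolding dV[abs_def] by measurable
  have pU: "prob_space (density lborel dU)" unfolding dU[abs_def]
    by (rule prob_density[OF km(3) k0(3) rU(1)[unfolded KU_def] rpos(1)])
  have pV: "prob_space (density lborel dV)" unfolding dV[abs_def]
    by (rule prob_density[OF km(4) k0(4) rV(1)[unfolded KV_def] rpos(2)])
  interpret PU: prob_space "density lborel dU" by (rule pU)
  interpret PV: prob_space "density lborel dV" by (rule pV)
  have "distr M (lborel \<Otimes>\<^sub>M lborel) UV = density lborel (\<lambda>q. ennreal (c * kU (fst q) * kV (snd q)))"
    unfolding lborel_prod distUV ..
  also have "\<dots> = density (lborel \<Otimes>\<^sub>M lborel) (\<lambda>(x, y). dU x * dV y)"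
  proof -
    have "c = 1 / (rU * rV)" using crr rpos by (simp add: field_simps)
    then have "(\<lambda>q. ennreal (c * kU (fst q) * kV (snd q))) = (\<lambda>(x, y). dU x * dV y)"
      using k0 rpos by (auto simp: fun_eq_iff dU dV ennreal_mult[symmetric])
    then show ?thesis unfolding lborel_prod by simp
  qed
  also have "\<dots> = density lborel dU \<Otimes>\<^sub>M density lborel dV"
    by (rule pair_measure_density[symmetric]) (simp_all add: sigma_finite_lborel PV.sigma_finite_measure_axioms)
  finally have jointUV: "distr M (lborel \<Otimes>\<^sub>M lborel) UV = density lborel dU \<Otimes>\<^sub>M density lborel dV" .
  define U where "U \<omega> = fst (UV \<omega>)" for \<omega>
  define V where "V \<omega> = snd (UV \<omega>)" for \<omega>
  have Um: "U \<in> M \<rightarrow>\<^sub>M lborel" unfolding U_def using UVm'' by measurable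
  have Vm: "V \<in> M \<rightarrow>\<^sub>M lborel" unfolding V_def using UVm'' by measurable
  have distU: "distr M lborel U = density lborel dU"
  proof -
    have "distr M lborel U = distr (distr M (lborel \<Otimes>\<^sub>M lborel) UV) lborel fst"
      by (subst distr_distr) (auto simp: UVm'' U_def[abs_def] o_def)
    also have "\<dots> = distr (density lborel dU \<Otimes>\<^sub>M density lborel dV) (density lborel dU) fst"
      unfolding jointUV by (rule distr_cong) simp_all
    also have "\<dots> = density lborel dU" by (rule PV.distr_pair_fst)
    finally show ?thesis .
  qed
  have distV: "distr M lborel V = density lborel dV"
  proof -
    have "distr M lborel V = distr (distr M (lborel \<Otimes>\<^sub>M lborel) UV) lborel snd"
      by (subst distr_distr) (auto simp: UVm'' V_def[abs_def] o_def)
    also have "\<dots> = density lborel dV"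
      unfolding jointUV
    proof (rule measure_eqI)
      fix A assume "A \<in> sets (distr (density lborel dU \<Otimes>\<^sub>M density lborel dV) lborel snd)"
      then have A: "A \<in> sets borel" by simp
      have "emeasure (distr (density lborel dU \<Otimes>\<^sub>M density lborel dV) lborel snd) A
          = emeasure (density lborel dU \<Otimes>\<^sub>M density lborel dV) (UNIV \<times> A)"
        using A by (subst emeasure_distr) (auto intro!: arg_cong2[where f=emeasure] simp: space_pair_measure)
      also have "\<dots> = emeasure (density lborel dU) UNIV * emeasure (density lborel dV) A"
        using A by (intro PV.emeasure_pair_measure_Times) auto
      also have "\<dots> = emeasure (density lborel dV) A"
        using PU.emeasure_space_1 by simp
      finally show "emeasure (distr (density lborel dU \<Otimes>\<^sub>M density lborel dV) lborel snd) A = emeasure (density lborel dV) A" .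
    qed simp
    finally show ?thesis .
  qed
  have indep: "P.indep_var borel U borel V"
  proof -
    have "distr M borel U = density lborel dU" unfolding distU[symmetric] by (rule distr_cong) simp_all
    moreover have "distr M borel V = density lborel dV" unfolding distV[symmetric] by (rule distr_cong) simp_all
    moreover have "distr M (borel \<Otimes>\<^sub>M borel) (\<lambda>x. (U x, V x)) = distr M (lborel \<Otimes>\<^sub>M lborel) UV"
      by (intro distr_cong refl sets_pair_measure_cong) (simp_all add: U_def V_def)
    ultimately have "distr M borel U \<Otimes>\<^sub>M distr M borel V = distr M (borel \<Otimes>\<^sub>M borel) (\<lambda>x. (U x, V x))"
      using jointUV by simp
    moreover have "P.random_variable borel U" "P.random_variable borel V" using Um Vm by simp_all
    ultimately show ?thesis using P.indep_var_distribution_eq by blast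
  qed
  have "distributed M lborel U dU" unfolding distributed_def using distU Um by simp
  moreover have "distributed M lborel V dV" unfolding distributed_def using distV Vm by simp
  ultimately show ?thesis using indep
    unfolding U_def[abs_def] V_def[abs_def] UV_def dU_def[abs_def] dV_def[abs_def] by simp
qed


end
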